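(* Let $f\in F_0(G)$ and let $r\in\mathbb Z_+$ satisfy $r\ge \|f\|_1/(Md)$. Conditional on $f_0=f$, for every $n\in\mathbb Z_+$ and $t\ge 0$, $$\xi_n\succ\tilde\xi_n(Md,r),\qquad \tau_n=\sum_{k=1}^n\xi_k\succ\sum_{k=1}^n\tilde\xi_k(Md,r)=\tilde\tau_n(Md,r),\qquad \tilde\eta_t(Md,r)\succ\eta_t .$$
   Context: A graph is a quadruple $G=(V,E,K,m)$: $V$ is a finite or countable set of nodes, which are elements of a real Hilbert space $\mathcal H$ with inner product "$\cdot$" and norm $|\cdot|$; $E$ is a set of undirected edges (at most one edge between any two distinct nodes, no self-loops); the edge between $x$ and $y$ is written $\langle x,y\rangle=\langle y,x\rangle$, and $y\sim x$ means this edge exists; $K=(k_{xy})_{x,y\in V}$ with $k_{xy}=k_{yx}\ge0$ and $k_{xy}=0$ if there is no edge; $m=(m_x)_{x\in V}$ with $m_x>0$. Let $e_{xy}=(y-x)/|y-x|$. Assume $d_0=\sup_{x\in V}\#\{y:y\sim x\}<\infty$, set $d=\max\{d_0,2\}$, and assume $M=\max\{\sup_{x\in V}m_x^{-1},\sup_{\langle x,y\rangle\in E}k_{xy}\}<\infty$. $V=V_0\cup V_1$ is a fixed partition into disjoint sets. $F(G)$ is the set of functions $f$ assigning a real number $f(x)$ to each $x\in V$ and a vector $f(\langle x,y\rangle)\in\mathcal H$ that is a real multiple of $y-x$ to each edge. For $1\le\alpha<\infty$, $\|f\|_\alpha=\big(\sum_{x\in V}|f(x)|^\alpha/m_x+\sum_{\langle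 x,y\rangle\in E}k_{xy}|f(\langle x,y\rangle)|^\alpha\big)^{1/\alpha}$, and $\|f\|_\infty=\max\{\sup_x|f(x)|,\sup_{\langle x,y\rangle}|f(\langle x,y\rangle)|\}$. $F_0(G)$ is the set of $f\in F(G)$ with finitely many nonzero values such that $|f(x)|\in\mathbb Z$ and $|f(\langle x,y\rangle)|\in\mathbb Z$ for all nodes and edges. The interacting particle system (IPS) $(f_t)_{t\ge0}$ is the continuous-time Markov jump process on $F_0(G)$ with the following transitions from state $f$: (i) for each $x\in V$, at rate $|f(x)|/m_x$, for every $y\sim x$ the edge value $f(\langle x,y\rangle)$ is replaced by $f(\langle x,y\rangle)+\mathrm{sgn}(f(x))\,e_{yx}$ (all other values unchanged); (ii) for each edge $\langle x,y\rangle$, at rate $k_{xy}|f(\langle x,y\rangle)|$, with $s=\mathrm{sgn}(f(\langle x,y\rangle)\cdot e_{xy})$, the value $f(x)$ is replaced by $f(x)+s$ if $x\in V_0$ and $f(y)$ by $f(y)-s$ if $y\in V_0$ (values at nodes of $V_1$ never change; this rule is symmetric in $x,y$). $P_f,\mathbb E_f$ denote probability and expectation given $f_0=f$. $\tau_0=0$, $\tau_n$ is the time of the $n$-th jump, $\xi_n=\tau_n-\tau_{n-1}$, $h_n=f_{\tau_n}$, and $\eta_t=\sup\{n:\tau_n\le t\}$. For $[0,\infty)$-valued random variables, $X\succ Y$ means $P(X>t)\ge P(Y>t)$ for all $t\ge0$. The Yule process with parameters $\lambda>0$, $r\in\mathbb Z_+$ is the pure birth process started at $r$ that jumps from $n$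 to $n+1$ at rate $n\lambda$; $\tilde\tau_n(\lambda,r)$ is the time of its $n$-th jump ($\tilde\tau_0=0$), $\tilde\xi_n(\lambda,r)=\tilde\tau_n(\lambda,r)-\tilde\tau_{n-1}(\lambda,r)$ (so the $\tilde\xi_n$ are independent, $\tilde\xi_n(\lambda,r)$ exponential with rate $(n+r-1)\lambda$), and $\tilde\eta_t(\lambda,r)=\sup\{n:\tilde\tau_n(\lambda,r)\le t\}$. *)

theory Defs
  imports "HOL-Probability.Probability"
begin

text \<open>Configurations: a value at each node and a vector at each (unordered) edge.
  Edges are represented as two-element sets {x,y} of nodes.\<close>
type_synonym 'a cfg = "('a \<Rightarrow> real) \<times> ('a set \<Rightarrow> 'a)"

definition ue :: "'a::real_inner \<Rightarrow> 'a \<Rightarrow> 'a" where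
  "ue x y = (1 / norm (y - x)) *\<^sub>R (y - x)"

definition nbrs :: "'a set set \<Rightarrow> 'a \<Rightarrow> 'a set" where
  "nbrs E x = {y. {x, y} \<in> E}"

definition other :: "'a set \<Rightarrow> 'a \<Rightarrow> 'a" where
  "other e z = the_elem (e - {z})"

definition dd :: "'a set \<Rightarrow> 'a set set \<Rightarrow> nat" where
  "dd V E = max (Sup ((\<lambda>x. card (nbrs E x)) ` V)) 2"

definition MM :: "'a set \<Rightarrow> 'a set set \<Rightarrow> ('a set \<Rightarrow> real) \<Rightarrow> ('a \<Rightarrow> real) \<Rightarrow> real" where
  "MM V E k m = Sup ((\<lambda>x. 1 / m x) ` V \<union> k ` E)"

definition F0 :: "'a::real_inner set \<Rightarrow> 'a set set \<Rightarrow> 'a cfg set" where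
  "F0 V E = {g. (\<forall>x. x \<notin> V \<longrightarrow> fst g x = 0) \<and> (\<forall>e. e \<notin> E \<longrightarrow> snd g e = 0)
      \<and> finite {x. fst g x \<noteq> 0} \<and> finite {e. snd g e \<noteq> 0}
      \<and> (\<forall>x. \<bar>fst g x\<bar> \<in> \<int>)
      \<and> (\<forall>e\<in>E. norm (snd g e) \<in> \<int> \<and> (\<forall>x y. e = {x, y} \<longrightarrow> (\<exists>c::real. snd g e = c *\<^sub>R (y - x))))}"

definition norm1 :: "'a set \<Rightarrow> 'a set set \<Rightarrow> ('a set \<Rightarrow> real) \<Rightarrow> ('a \<Rightarrow> real) \<Rightarrow> 'a::real_normed_vector cfg \<Rightarrow> real" where
  "norm1 V E k m g = (\<Sum>x\<in>{x\<in>V. fst g x \<noteq> 0}. \<bar>fst g x\<bar> / m x)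
                   + (\<Sum>e\<in>{e\<in>E. snd g e \<noteq> 0}. k e * norm (snd g e))"

definition node_step :: "'a set set \<Rightarrow> 'a::real_inner cfg \<Rightarrow> 'a \<Rightarrow> 'a cfg" where
  "node_step E g x = (fst g, \<lambda>e. if e \<in> E \<and> x \<in> e
       then snd g e + sgn (fst g x) *\<^sub>R ue (other e x) x else snd g e)"

text \<open>Transition (ii): edge e = {x,y} fires; an endpoint z in V0 with other endpoint w
  gets sgn(f(e) . e_{zw}) added (this is +s at x and -s at y).\<close>
definition edge_step :: "'a set \<Rightarrow> 'a::real_inner cfg \<Rightarrow> 'a set \<Rightarrow> 'a cfg" where
  "edge_step V0 g e = (\<lambda>z. if z \<in> e \<and> z \<in> V0
       then fst g z + sgn (snd g e \<bullet> ue z (other e z)) else fst g z, snd g)"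

definition Qrate :: "'a set \<Rightarrow> 'a set set \<Rightarrow> ('a set \<Rightarrow> real) \<Rightarrow> ('a \<Rightarrow> real) \<Rightarrow> 'a set
    \<Rightarrow> 'a::real_inner cfg \<Rightarrow> 'a cfg \<Rightarrow> real" where
  "Qrate V E k m V0 g g' =
     (\<Sum>x\<in>{x\<in>V. fst g x \<noteq> 0 \<and> node_step E g x = g'}. \<bar>fst g x\<bar> / m x)
   + (\<Sum>e\<in>{e\<in>E. snd g e \<noteq> 0 \<and> edge_step V0 g e = g'}. k e * norm (snd g e))"

definition qrate :: "'a set \<Rightarrow> 'a set set \<Rightarrow> ('a set \<Rightarrow> real) \<Rightarrow> ('a \<Rightarrow> real) \<Rightarrow> 'a set
    \<Rightarrow> 'a::real_inner cfg \<Rightarrow> real" where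
  "qrate V E k m V0 g =
     (\<Sum>x\<in>{x\<in>V. fst g x \<noteq> 0 \<and> node_step E g x \<noteq> g}. \<bar>fst g x\<bar> / m x)
   + (\<Sum>e\<in>{e\<in>E. snd g e \<noteq> 0 \<and> edge_step V0 g e \<noteq> g}. k e * norm (snd g e))"

definition jprob :: "'a set \<Rightarrow> 'a set set \<Rightarrow> ('a set \<Rightarrow> real) \<Rightarrow> ('a \<Rightarrow> real) \<Rightarrow> 'a set
    \<Rightarrow> 'a::real_inner cfg \<Rightarrow> 'a cfg \<Rightarrow> real" where
  "jprob V E k m V0 g g' =
     (if qrate V E k m V0 g = 0 then (if g' = g then 1 else 0)
      else if g' = g then 0 else Qrate V E k m V0 g g' / qrate V E k m V0 g)"

text \<open>(H, X) is a realisation, started at f, of the IPS in jump-chain / holding-time form: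
  H n = h_n = f_{tau_n} (H 0 = f), X n = xi_n (n \<ge> 1), the holding time (\<infinity> after absorption).
  The finite-dimensional laws are those of the Markov jump process with rates Qrate.\<close>
definition IPS_realisation :: "'a set \<Rightarrow> 'a set set \<Rightarrow> ('a set \<Rightarrow> real) \<Rightarrow> ('a \<Rightarrow> real) \<Rightarrow> 'a set
    \<Rightarrow> 'a::real_inner cfg \<Rightarrow> 'w measure \<Rightarrow> (nat \<Rightarrow> 'w \<Rightarrow> 'a cfg) \<Rightarrow> (nat \<Rightarrow> 'w \<Rightarrow> ennreal) \<Rightarrow> bool" where
  "IPS_realisation V E k m V0 f P H X \<longleftrightarrow>
     prob_space P
   \<and> (\<forall>\<omega>\<in>space P. H 0 \<omega> = f)
   \<and> (\<forall>n g. {\<omega>\<in>space P. H n \<omega> = g} \<in> sets P)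
   \<and> (\<forall>n. X n \<in> borel_measurable P)
   \<and> (\<forall>n (g::nat \<Rightarrow> 'a cfg) (t::nat \<Rightarrow> real). g 0 = f \<longrightarrow> (\<forall>j\<in>{1..n}. 0 \<le> t j) \<longrightarrow>
        measure P {\<omega>\<in>space P. \<forall>j\<in>{1..n}. H j \<omega> = g j \<and> ennreal (t j) < X j \<omega>}
        = (\<Prod>j\<in>{1..n}. jprob V E k m V0 (g (j - 1)) (g j)
                          * exp (- qrate V E k m V0 (g (j - 1)) * t j)))"

text \<open>Y 1, Y 2, ... are the inter-jump times of a Yule process with parameters lam, r:
  independent, Y n exponential with rate (n + r - 1) lam (= \<infinity> a.s. if that rate is 0).\<close>
definition Yule_times :: "real \<Rightarrow> nat \<Rightarrow> 'v measure \<Rightarrow> (nat \<Rightarrow> 'v \<Rightarrow> ennreal) \<Rightarrow> bool" where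
  "Yule_times lam r N Y \<longleftrightarrow>
     prob_space N
   \<and> prob_space.indep_vars N (\<lambda>_. borel) Y {1..}
   \<and> (\<forall>n\<ge>1. \<forall>t::real. 0 \<le> t \<longrightarrow>
        measure N {\<omega>\<in>space N. ennreal t < Y n \<omega>} = exp (- (real (n + r - 1) * lam) * t))"

definition jtime :: "(nat \<Rightarrow> 'w \<Rightarrow> ennreal) \<Rightarrow> nat \<Rightarrow> 'w \<Rightarrow> ennreal" where
  "jtime X n \<omega> = (\<Sum>j\<in>{1..n}. X j \<omega>)"

definition jcount :: "(nat \<Rightarrow> 'w \<Rightarrow> ennreal) \<Rightarrow> real \<Rightarrow> 'w \<Rightarrow> ennreal" where
  "jcount X t \<omega> = Sup {of_nat n | n. jtime X n \<omega> \<le> ennreal t}"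

definition sdom :: "'w measure \<Rightarrow> ('w \<Rightarrow> ennreal) \<Rightarrow> 'v measure \<Rightarrow> ('v \<Rightarrow> ennreal) \<Rightarrow> bool" where
  "sdom P X N Y \<longleftrightarrow> (\<forall>t::real. 0 \<le> t \<longrightarrow>
      measure N {\<omega>\<in>space N. ennreal t < Y \<omega>} \<le> measure P {\<omega>\<in>space P. ennreal t < X \<omega>})"

end

theory Submission
  imports Defs
begin

lemma enn_mult_less:
  fixes c t :: real and y :: ennreal
  assumes "0 < c" "0 \<le> t"
  shows "ennreal t < ennreal c * y \<longleftrightarrow> ennreal (t / c) < y"
proof (cases y)
  case (real y')
  then show ?thesis using assms
    by (simp add: ennreal_mult[symmetric] ennreal_less_iff pos_divide_less_eq mult.commute)
next
  case top
  then show ?thesis using assms by (simp add: ennreal_mult_top)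
qed

lemma sets_borel_G:
  "sets (sigma UNIV (insert UNIV (range greaterThan)) :: ennreal measure) = sets borel"
proof -
  have "sets (borel::ennreal measure) = sets (sigma UNIV (range greaterThan))"
    by (subst borel_Ioi) (rule refl)
  also have "\<dots> = sigma_sets UNIV (range greaterThan)" by simp
  also have "\<dots> = sigma_sets UNIV (insert UNIV (range greaterThan))"
    by (intro sigma_sets_eqI) (auto intro: sigma_sets.Basic sigma_sets_top)
  finally show ?thesis by simp
qed

lemma comp_lemma:
  fixes P :: "'w measure" and X :: "nat \<Rightarrow> 'w \<Rightarrow> ennreal" and Q :: "'w \<Rightarrow> bool"
    and N :: "'v measure" and Y :: "nat \<Rightarrow> 'v \<Rightarrow> ennreal"
    and q lr :: "nat \<Rightarrow> real" and c :: real and n :: nat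
    and S :: "(nat \<Rightarrow> ennreal) set"
  assumes P: "prob_space P" and N: "prob_space N"
    and Xm: "\<And>j. X j \<in> borel_measurable P"
    and Qm: "{\<omega>\<in>space P. Q \<omega>} \<in> sets P"
    and form: "\<And>t. (\<forall>j\<in>{1..n}. 0 \<le> t j) \<Longrightarrow>
        measure P {\<omega>\<in>space P. Q \<omega> \<and> (\<forall>j\<in>{1..n}. ennreal (t j) < X j \<omega>)} = c * (\<Prod>j\<in>{1..n}. exp (- q j * t j))"
    and c: "0 \<le> c" and n: "1 \<le> n"
    and q: "\<And>j. j \<in> {1..n} \<Longrightarrow> 0 \<le> q j \<and> q j \<le> lr j"
    and ind: "prob_space.indep_vars N (\<lambda>_. borel) Y {1..}"
    and Ydist: "\<And>j t. j \<in> {1..n} \<Longrightarrow> 0 \<le> t \<Longrightarrow> measure N {\<omega>\<in>space N. ennreal t < Y j \<omega>} = exp (- lr j * t)"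
    and S: "S \<in> sets (PiM {1..n} (\<lambda>_. borel))"
    and up: "\<And>x y. x \<in> S \<Longrightarrow> y \<in> space (PiM {1..n} (\<lambda>_. borel)) \<Longrightarrow> (\<forall>j\<in>{1..n}. x j \<le> y j) \<Longrightarrow> y \<in> S"
  shows "c * measure N {\<omega>\<in>space N. (\<lambda>j\<in>{1..n}. Y j \<omega>) \<in> S}
     \<le> measure P {\<omega>\<in>space P. (Q \<omega> \<and> (\<forall>j\<in>{1..n}. 0 < X j \<omega>)) \<and> (\<lambda>j\<in>{1..n}. X j \<omega>) \<in> S}"
proof -
  interpret P: prob_space P by fact
  interpret N: prob_space N by fact
  define I where "I = {1..n}"
  have I: "finite I" "I \<noteq> {}" using n by (auto simp: I_def)
  define M where "M = PiM I (\<lambda>_. borel::ennreal measure)"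
  define \<Omega> where "\<Omega> = space M"
  have \<Omega>: "\<Omega> = PiE I (\<lambda>_. UNIV)" by (simp add: \<Omega>_def M_def space_PiM)
  define G where "G = (insert UNIV (range greaterThan) :: ennreal set set)"
  define Pg where "Pg = {{f\<in>PiE I (\<lambda>_. UNIV). \<forall>i\<in>j. f i \<in> A i} | A j. j \<in> {I} \<and> A \<in> Pi j (\<lambda>_. G)}"
  have PgE: "Pg = {{f\<in>\<Omega>. \<forall>i\<in>I. f i \<in> A i} | A. A \<in> I \<rightarrow> G}" by (auto simp: Pg_def \<Omega>)
  have setsM: "sets M = sigma_sets \<Omega> Pg"
  proof -
    have "sets M = sets (PiM I (\<lambda>i. sigma UNIV G))"
      unfolding M_def by (intro sets_PiM_cong) (simp_all add: G_def sets_borel_G)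
    also have "\<dots> = sets (sigma (PiE I (\<lambda>_. UNIV)) Pg)"
      unfolding Pg_def
      by (rule sets_PiM_sigma[where \<Omega>="\<lambda>_. UNIV" and E="\<lambda>_. G" and J="{I}"])
        (auto simp: I intro!: exI[of _ "{UNIV}"] simp: G_def)
    also have "\<dots> = sigma_sets \<Omega> Pg" by (subst sets_measure_of) (auto simp: Pg_def \<Omega>)
    finally show ?thesis .
  qed
  note Xm[measurable]
  have Qp[measurable]: "Measurable.pred P Q" using Qm by (simp add: pred_def)
  define B0 where "B0 = {\<omega>\<in>space P. Q \<omega> \<and> (\<forall>j\<in>I. 0 < X j \<omega>)}"
  have B0m[measurable]: "B0 \<in> sets P" unfolding B0_def using I by measurable
  define Xv where "Xv = (\<lambda>\<omega>. \<lambda>j\<in>I. X j \<omega>)"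
  have Xvm: "Xv \<in> measurable P M" unfolding Xv_def M_def by (intro measurable_restrict) simp
  have Xvm': "Xv \<in> measurable (density P (indicator B0)) M"
    using Xvm by (subst measurable_cong_sets[OF sets_density refl])
  define \<phi> where "\<phi> j y = (if q j = 0 then \<infinity> else ennreal (lr j / q j) * y)" for j y
  have \<phi>m: "\<phi> j \<in> borel_measurable borel" for j unfolding \<phi>_def by measurable
  have indY': "N.indep_vars (\<lambda>_. borel) (\<lambda>j \<omega>. \<phi> j (Y j \<omega>)) {1..}"
    by (rule N.indep_vars_compose2[OF ind]) (rule \<phi>m)
  have Ym[measurable]: "Y j \<in> borel_measurable N" if "j \<in> {1..}" for j
    using ind that by (auto simp: N.indep_vars_def)
  define Yv' where "Yv' = (\<lambda>\<omega>. \<lambda>j\<in>I. \<phi> j (Y j \<omega>))"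
  define Yv where "Yv = (\<lambda>\<omega>. \<lambda>j\<in>I. Y j \<omega>)"
  have Yvm': "Yv' \<in> measurable N M" unfolding Yv'_def M_def
    by (intro measurable_restrict) (auto simp: I_def intro!: measurable_compose[OF _ \<phi>m])
  have Yvm: "Yv \<in> measurable N M" unfolding Yv_def M_def
    by (intro measurable_restrict) (auto simp: I_def)
  define \<mu> where "\<mu> = distr (density P (indicator B0)) M Xv"
  define \<nu> where "\<nu> = density (distr N M Yv') (\<lambda>_. ennreal c)"
  have Y'dist: "N.prob {\<omega>\<in>space N. ennreal t < \<phi> j (Y j \<omega>)} = exp (- q j * t)"
    if j: "j \<in> I" and t: "0 \<le> t" for j t
  proof (cases "q j = 0")
    case True
    then show ?thesis by (simp add: \<phi>_def N.prob_space)
  next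
    case False
    with q[of j] j have qp: "0 < q j" "q j \<le> lr j" by (auto simp: I_def)
    hence lp: "0 < lr j / q j" by simp
    have "{\<omega>\<in>space N. ennreal t < \<phi> j (Y j \<omega>)} = {\<omega>\<in>space N. ennreal (t / (lr j / q j)) < Y j \<omega>}"
      using False enn_mult_less[OF lp t] by (auto simp: \<phi>_def)
    also have "N.prob \<dots> = exp (- lr j * (t / (lr j / q j)))"
    proof -
      have "0 \<le> t / (lr j / q j)" using t lp by (intro divide_nonneg_pos)
      moreover have "j \<in> {1..n}" using j by (simp add: I_def)
      ultimately show ?thesis using Ydist by blast
    qed
    also have "\<dots> = exp (- q j * t)" using qp by (simp add: field_simps)
    finally show ?thesis .
  qed
  define F where "F j b = (if b = \<infinity> then 0 else exp (- q j * enn2real b))" for j and b :: ennreal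
  have F0: "0 \<le> F j b" for j b by (simp add: F_def)
  have GA: "A j \<in> G" if "\<And>j. j \<in> I \<Longrightarrow> (A j = UNIV \<and> b j = 0) \<or> A j = greaterThan (b j)" "j \<in> I" for A b j
    using that(1)[OF that(2)] by (auto simp: G_def)
  have rect: "emeasure \<mu> R = ennreal (c * (\<Prod>j\<in>I. F j (b j))) \<and> emeasure \<nu> R = ennreal (c * (\<Prod>j\<in>I. F j (b j)))"
    if R: "R = {f\<in>\<Omega>. \<forall>i\<in>I. f i \<in> A i}" and bA: "\<And>j. j \<in> I \<Longrightarrow> (A j = UNIV \<and> b j = 0) \<or> A j = greaterThan (b j)" for R A b
  proof
    have AG: "A \<in> I \<rightarrow> G" by (rule Pi_I) (rule GA[OF bA])
    have "R \<in> Pg" unfolding PgE R using AG by blast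
    hence Rm: "R \<in> sets M" unfolding setsM by (rule sigma_sets.Basic)
    have pj: "(0 < x \<and> x \<in> A j) \<longleftrightarrow> b j < x" if "j \<in> I" for j x
      using bA[OF that] by (auto intro: le_less_trans[OF zero_le])
    have Z: "B0 \<inter> (Xv -` R \<inter> space P) = {\<omega>\<in>space P. Q \<omega> \<and> (\<forall>j\<in>I. b j < X j \<omega>)}"
      using pj by (auto simp: B0_def Xv_def R \<Omega>)
    have "emeasure \<mu> R = emeasure (density P (indicator B0)) (Xv -` R \<inter> space P)"
      unfolding \<mu>_def by (subst emeasure_distr[OF Xvm' Rm]) simp
    also have "\<dots> = emeasure P (B0 \<inter> (Xv -` R \<inter> space P))"
      using measurable_sets[OF Xvm Rm]
      by (simp add: emeasure_density indicator_inter_arith[symmetric] nn_integral_indicator)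
    also have "\<dots> = ennreal (c * (\<Prod>j\<in>I. F j (b j)))"
    proof (cases "\<exists>j\<in>I. b j = \<infinity>")
      case True
      then obtain j where "j \<in> I" "b j = \<infinity>" by blast
      hence "(\<Prod>j\<in>I. F j (b j)) = 0" using I by (intro prod_zero) (auto simp: F_def)
      moreover have "{\<omega>\<in>space P. Q \<omega> \<and> (\<forall>j\<in>I. b j < X j \<omega>)} = {}"
        using \<open>j \<in> I\<close> \<open>b j = \<infinity>\<close> by (auto intro!: bexI[of _ j] simp: top.extremum_strict)
      ultimately show ?thesis unfolding Z by (metis emeasure_empty mult_zero_right ennreal_0)
    next
      case False
      define tt where "tt j = enn2real (b j)" for j
      have bt: "b j = ennreal (tt j)" if "j \<in> I" for j using False that by (simp add: tt_def less_top)
      have "{\<omega>\<in>space P. Q \<omega> \<and> (\<forall>j\<in>I. b j < X j \<omega>)} = {\<omega>\<in>space P. Q \<omega> \<and> (\<forall>j\<in>{1..n}. ennreal (tt j) < X j \<omega>)}"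
        using bt by (auto simp: I_def)
      moreover have "measure P {\<omega>\<in>space P. Q \<omega> \<and> (\<forall>j\<in>{1..n}. ennreal (tt j) < X j \<omega>)} = c * (\<Prod>j\<in>{1..n}. exp (- q j * tt j))"
        by (rule form) (simp add: tt_def)
      moreover have "(\<Prod>j\<in>I. F j (b j)) = (\<Prod>j\<in>{1..n}. exp (- q j * tt j))"
        using False by (auto simp: I_def F_def tt_def intro!: prod.cong)
      ultimately show ?thesis unfolding Z by (simp add: P.emeasure_eq_measure)
    qed
    finally show "emeasure \<mu> R = ennreal (c * (\<Prod>j\<in>I. F j (b j)))" .
  next
    have AG: "A \<in> I \<rightarrow> G" by (rule Pi_I) (rule GA[OF bA])
    have "R \<in> Pg" unfolding PgE R using AG by blast
    hence Rm: "R \<in> sets M" unfolding setsM by (rule sigma_sets.Basic)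
    have Am: "A j \<in> sets borel" if "j \<in> I" for j using bA[OF that] by (elim disjE conjE) simp_all
    have YZ: "Yv' -` R \<inter> space N = (\<Inter>j\<in>I. (\<lambda>\<omega>. \<phi> j (Y j \<omega>)) -` A j \<inter> space N)"
      using I by (auto simp: Yv'_def R \<Omega>)
    have pr: "N.prob ((\<lambda>\<omega>. \<phi> j (Y j \<omega>)) -` A j \<inter> space N) = F j (b j)" if j: "j \<in> I" for j
    proof (cases "A j = UNIV \<and> b j = 0")
      case True
      then show ?thesis by (simp add: F_def N.prob_space)
    next
      case False
      hence Ab: "A j = greaterThan (b j)" using bA[OF j] by blast
      show ?thesis
      proof (cases "b j = \<infinity>")
        case True
        have "A j = {}" using Ab True by (simp add: greaterThan_def top.extremum_strict)
        then show ?thesis using True by (simp add: F_def)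
      next
        case bf: False
        have "(\<lambda>\<omega>. \<phi> j (Y j \<omega>)) -` A j \<inter> space N = {\<omega>\<in>space N. ennreal (enn2real (b j)) < \<phi> j (Y j \<omega>)}"
          unfolding Ab using bf by (auto simp: less_top)
        then show ?thesis using Y'dist[OF j, of "enn2real (b j)"] bf by (simp add: F_def)
      qed
    qed
    have "emeasure \<nu> R = ennreal c * emeasure N (Yv' -` R \<inter> space N)"
      unfolding \<nu>_def using Rm Yvm' by (simp add: emeasure_density_const emeasure_distr)
    also have "\<dots> = ennreal c * ennreal (\<Prod>j\<in>I. N.prob ((\<lambda>\<omega>. \<phi> j (Y j \<omega>)) -` A j \<inter> space N))"
      unfolding YZ N.emeasure_eq_measure
      by (subst N.indep_varsD[OF indY']) (use I Am in \<open>auto simp: I_def\<close>)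
    also have "\<dots> = ennreal (c * (\<Prod>j\<in>I. F j (b j)))"
      using pr c F0 by (simp add: ennreal_mult prod_nonneg)
    finally show "emeasure \<nu> R = ennreal (c * (\<Prod>j\<in>I. F j (b j)))" .
  qed
  have \<mu>\<nu>: "\<mu> = \<nu>"
  proof (rule measure_eqI_generator_eq[where E=Pg and \<Omega>=\<Omega> and A="\<lambda>_. \<Omega>"])
    show "Int_stable Pg"
    proof (rule Int_stableI)
      fix a b assume "a \<in> Pg" "b \<in> Pg"
      then obtain A B where A: "A \<in> I \<rightarrow> G" "a = {f\<in>\<Omega>. \<forall>i\<in>I. f i \<in> A i}"
        and B: "B \<in> I \<rightarrow> G" "b = {f\<in>\<Omega>. \<forall>i\<in>I. f i \<in> B i}"
        unfolding PgE by blast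
      have "(\<lambda>i. A i \<inter> B i) \<in> I \<rightarrow> G"
      proof
        fix i assume "i \<in> I"
        with A B have "A i \<in> G" "B i \<in> G" by auto
        have gi: "{a<..} \<inter> {b<..} = {max a b<..}" for a b :: ennreal by auto
        from \<open>A i \<in> G\<close> \<open>B i \<in> G\<close> show "A i \<inter> B i \<in> G" unfolding G_def
          by (elim insertE imageE) (simp_all add: gi)
      qed
      moreover have "a \<inter> b = {f\<in>\<Omega>. \<forall>i\<in>I. f i \<in> A i \<inter> B i}" using A B by auto
      ultimately show "a \<inter> b \<in> Pg" unfolding PgE
        by (intro CollectI exI[of _ "\<lambda>i. A i \<inter> B i"] conjI) simp_all
    qed
    show "Pg \<subseteq> Pow \<Omega>" unfolding PgE by auto
    show "sets \<mu> = sigma_sets \<Omega> Pg" unfolding \<mu>_def by (simp add: setsM)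
    show "sets \<nu> = sigma_sets \<Omega> Pg" unfolding \<nu>_def by (simp add: setsM)
    have UG: "UNIV \<in> G" by (simp add: G_def)
    have \<Omega>Pg: "\<Omega> = {f\<in>\<Omega>. \<forall>i\<in>I. f i \<in> UNIV}" by simp
    have "\<Omega> \<in> Pg" unfolding PgE
      by (intro CollectI exI[of _ "\<lambda>_. UNIV"] conjI) (simp_all add: UG)
    then show "range (\<lambda>_. \<Omega>) \<subseteq> Pg" by auto
    show "(\<Union>i. \<Omega>) = \<Omega>" by simp
    have "emeasure \<mu> \<Omega> = ennreal (c * (\<Prod>j\<in>I. F j ((\<lambda>_. 0) j)))"
      by (rule conjunct1[OF rect[OF \<Omega>Pg]]) simp
    then show "emeasure \<mu> \<Omega> \<noteq> \<infinity>" for i :: nat by simp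
  next
    fix R assume "R \<in> Pg"
    then obtain A where A: "A \<in> I \<rightarrow> G" "R = {f\<in>\<Omega>. \<forall>i\<in>I. f i \<in> A i}"
      unfolding PgE by blast
    have "\<forall>j\<in>I. \<exists>bb. (A j = UNIV \<and> bb = 0) \<or> A j = greaterThan bb"
    proof
      fix j assume "j \<in> I"
      with A have "A j \<in> G" by auto
      then show "\<exists>bb. (A j = UNIV \<and> bb = 0) \<or> A j = greaterThan bb" unfolding G_def by auto
    qed
    then obtain b where b: "\<And>j. j \<in> I \<Longrightarrow> (A j = UNIV \<and> b j = 0) \<or> A j = greaterThan (b j)"
      by metis
    from rect[OF A(2) b] show "emeasure \<mu> R = emeasure \<nu> R" by simp
  qed
  have SM: "S \<in> sets M" using S by (simp add: M_def I_def)
  have \<phi>mono: "y \<le> \<phi> j y" if "j \<in> I" for j y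
  proof (cases "q j = 0")
    case True then show ?thesis by (simp add: \<phi>_def)
  next
    case False
    with q[of j] that have "0 < q j" "q j \<le> lr j" by (auto simp: I_def)
    hence "1 \<le> lr j / q j" by simp
    hence "1 \<le> ennreal (lr j / q j)" by (simp add: ennreal_1[symmetric] del: ennreal_1)
    hence "1 * y \<le> ennreal (lr j / q j) * y" by (rule mult_right_mono) simp
    then show ?thesis using False by (simp add: \<phi>_def)
  qed
  have TP: "{\<omega>\<in>space P. (Q \<omega> \<and> (\<forall>j\<in>{1..n}. 0 < X j \<omega>)) \<and> (\<lambda>j\<in>{1..n}. X j \<omega>) \<in> S} = B0 \<inter> (Xv -` S \<inter> space P)"
    by (auto simp: B0_def Xv_def I_def)
  have TN: "{\<omega>\<in>space N. (\<lambda>j\<in>{1..n}. Y j \<omega>) \<in> S} = Yv -` S \<inter> space N"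
    by (auto simp: Yv_def I_def)
  have "emeasure \<mu> S = emeasure P (B0 \<inter> (Xv -` S \<inter> space P))"
  proof -
    have "emeasure \<mu> S = emeasure (density P (indicator B0)) (Xv -` S \<inter> space P)"
      unfolding \<mu>_def by (subst emeasure_distr[OF Xvm' SM]) simp
    also have "\<dots> = emeasure P (B0 \<inter> (Xv -` S \<inter> space P))"
      using measurable_sets[OF Xvm SM]
      by (simp add: emeasure_density indicator_inter_arith[symmetric] nn_integral_indicator)
    finally show ?thesis .
  qed
  moreover have "emeasure \<nu> S = ennreal c * emeasure N (Yv' -` S \<inter> space N)"
    unfolding \<nu>_def using SM Yvm' by (simp add: emeasure_density_const emeasure_distr)
  moreover have "emeasure N (Yv -` S \<inter> space N) \<le> emeasure N (Yv' -` S \<inter> space N)"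
  proof (rule emeasure_mono)
    show "Yv' -` S \<inter> space N \<in> sets N" by (rule measurable_sets[OF Yvm' SM])
    show "Yv -` S \<inter> space N \<subseteq> Yv' -` S \<inter> space N"
    proof
      fix \<omega> assume "\<omega> \<in> Yv -` S \<inter> space N"
      hence "\<omega> \<in> space N" "Yv \<omega> \<in> S" by auto
      moreover have "Yv' \<omega> \<in> space (PiM {1..n} (\<lambda>_. borel))"
        by (simp add: Yv'_def I_def space_PiM)
      moreover have "\<forall>j\<in>{1..n}. Yv \<omega> j \<le> Yv' \<omega> j"
        using \<phi>mono by (simp add: Yv_def Yv'_def I_def)
      ultimately show "\<omega> \<in> Yv' -` S \<inter> space N" using up by blast
    qed
  qed
  ultimately have "ennreal c * emeasure N (Yv -` S \<inter> space N) \<le> emeasure P (B0 \<inter> (Xv -` S \<inter> space P))"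
    using \<mu>\<nu> by (metis mult_left_mono zero_le)
  hence "ennreal (c * measure N (Yv -` S \<inter> space N)) \<le> ennreal (measure P (B0 \<inter> (Xv -` S \<inter> space P)))"
    using c by (simp add: N.emeasure_eq_measure P.emeasure_eq_measure ennreal_mult)
  hence "c * measure N (Yv -` S \<inter> space N) \<le> measure P (B0 \<inter> (Xv -` S \<inter> space P))"
    by (simp add: ennreal_le_iff)
  then show ?thesis unfolding TP TN .
qed


lemma norm_ue_le: "norm (ue a b) \<le> 1"
  by (simp add: ue_def)

lemma abs_sgn_le1: "\<bar>sgn (x::real)\<bar> \<le> 1"
  by (simp add: abs_sgn_eq)

locale ips =
  fixes V :: "'a::{real_inner,complete_space} set"
    and E :: "'a set set" and k :: "'a set \<Rightarrow> real" and m :: "'a \<Rightarrow> real"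
    and V0 :: "'a set" and f :: "'a cfg"
  assumes V: "V \<noteq> {}"
    and E: "E \<subseteq> {{x, y} | x y. x \<in> V \<and> y \<in> V \<and> x \<noteq> y}"
    and k: "\<forall>e\<in>E. 0 \<le> k e"
    and m: "\<forall>x\<in>V. 0 < m x"
    and deg: "\<forall>x\<in>V. finite (nbrs E x)" "bdd_above ((\<lambda>x. card (nbrs E x)) ` V)"
    and Mfin: "bdd_above ((\<lambda>x. 1 / m x) ` V)" "bdd_above (k ` E)"
    and V0: "V0 \<subseteq> V"
    and f: "f \<in> F0 V E"
begin

abbreviation "MMv \<equiv> MM V E k m"
abbreviation "ddv \<equiv> dd V E"
definition lam where "lam = MMv * real ddv"

lemma MM_ge_m: "x \<in> V \<Longrightarrow> 1 / m x \<le> MMv"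
  unfolding MM_def using Mfin by (intro cSup_upper) (auto simp: bdd_above_Un)

lemma MM_ge_k: "e \<in> E \<Longrightarrow> k e \<le> MMv"
  unfolding MM_def using Mfin by (intro cSup_upper) (auto simp: bdd_above_Un)

lemma MM_pos: "0 < MMv"
proof -
  obtain x where "x \<in> V" using V by blast
  with m have "0 < 1 / m x" by auto
  also have "\<dots> \<le> MMv" by (rule MM_ge_m) fact
  finally show ?thesis .
qed

lemma dd_ge: "x \<in> V \<Longrightarrow> card (nbrs E x) \<le> ddv"
  unfolding dd_def using deg by (intro le_trans[OF cSup_upper max.cobounded1]) auto

lemma dd_2: "2 \<le> ddv" unfolding dd_def by simp

lemma lam_pos: "0 < lam" unfolding lam_def using MM_pos dd_2 by simp

lemma edge_sub: "e \<in> E \<Longrightarrow> e \<subseteq> V \<and> finite e \<and> card e \<le> 2"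
  using E by (auto simp: card_insert_if)

lemma inc_sub: "x \<in> V \<Longrightarrow> {e\<in>E. x \<in> e} \<subseteq> (\<lambda>y. {x, y}) ` nbrs E x"
proof
  fix e assume "x \<in> V" "e \<in> {e\<in>E. x \<in> e}"
  then obtain a b where e: "e = {a, b}" "e \<in> E" "x \<in> e" using E by blast
  show "e \<in> (\<lambda>y. {x, y}) ` nbrs E x"
  proof (cases "x = a")
    case True then show ?thesis using e by (auto simp: nbrs_def)
  next
    case False then have "x = b" using e by auto
    then show ?thesis using e by (auto simp: nbrs_def insert_commute intro!: image_eqI[of _ _ a])
  qed
qed

lemma inc_fin: "x \<in> V \<Longrightarrow> finite {e\<in>E. x \<in> e} \<and> card {e\<in>E. x \<in> e} \<le> ddv"
proof -
  assume x: "x \<in> V"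
  have fin: "finite ((\<lambda>y. {x, y}) ` nbrs E x)" using deg x by auto
  have "card {e\<in>E. x \<in> e} \<le> card ((\<lambda>y. {x, y}) ` nbrs E x)" by (rule card_mono[OF fin inc_sub[OF x]])
  also have "\<dots> \<le> card (nbrs E x)" by (rule card_image_le) (use deg x in auto)
  also have "\<dots> \<le> ddv" by (rule dd_ge[OF x])
  finally show ?thesis using finite_subset[OF inc_sub[OF x] fin] by simp
qed

definition good :: "'a cfg \<Rightarrow> bool" where
  "good g \<longleftrightarrow> (\<forall>x. x \<notin> V \<longrightarrow> fst g x = 0) \<and> (\<forall>e. e \<notin> E \<longrightarrow> snd g e = 0)
     \<and> finite {x. fst g x \<noteq> 0} \<and> finite {e. snd g e \<noteq> 0}"

lemma good_f: "good f" using f by (simp add: good_def F0_def)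

definition succs where
  "succs g = insert g (node_step E g ` {x\<in>V. fst g x \<noteq> 0} \<union> edge_step V0 g ` {e\<in>E. snd g e \<noteq> 0})"

lemma finite_succs: "good g \<Longrightarrow> finite (succs g)"
  unfolding succs_def good_def by (auto intro: finite_subset)


lemma node_step_good:
  assumes g: "good g" and x: "x \<in> V"
  shows "good (node_step E g x) \<and> norm1 V E k m (node_step E g x) \<le> norm1 V E k m g + lam"
proof -
  define h where "h = node_step E g x"
  have fh: "fst h = fst g" by (simp add: h_def node_step_def)
  have sh: "snd h e = (if e \<in> E \<and> x \<in> e then snd g e + sgn (fst g x) *\<^sub>R ue (other e x) x else snd g e)" for e
    by (simp add: h_def node_step_def)
  define T where "T = {e\<in>E. snd g e \<noteq> 0} \<union> {e\<in>E. x \<in> e}"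
  have finT: "finite T" unfolding T_def using g inc_fin[OF x] by (auto simp: good_def)
  have suppT: "{e. snd h e \<noteq> 0} \<subseteq> T" using g by (auto simp: T_def sh good_def split: if_splits)
  have gh: "good h" using g finite_subset[OF suppT finT] by (auto simp: good_def fh sh)
  have "(\<Sum>e\<in>{e\<in>E. snd h e \<noteq> 0}. k e * norm (snd h e)) = (\<Sum>e\<in>T. k e * norm (snd h e))"
    by (rule sum.mono_neutral_left[OF finT]) (use suppT in \<open>auto simp: T_def\<close>)
  also have "\<dots> \<le> (\<Sum>e\<in>T. k e * norm (snd g e) + (if x \<in> e then k e else 0))"
  proof (rule sum_mono)
    fix e assume e: "e \<in> T"
    hence ke: "0 \<le> k e" using k by (auto simp: T_def)
    have "norm (snd g e + sgn (fst g x) *\<^sub>R ue (other e x) x) \<le> norm (snd g e) + 1"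
    proof -
      have n1: "norm (sgn (fst g x) *\<^sub>R ue (other e x) x) \<le> 1 * 1"
        unfolding norm_scaleR by (intro mult_mono abs_sgn_le1 norm_ue_le) auto
      show ?thesis using n1 norm_triangle_ineq[of "snd g e" "sgn (fst g x) *\<^sub>R ue (other e x) x"] by linarith
    qed
    then have b: "k e * norm (snd g e + sgn (fst g x) *\<^sub>R ue (other e x) x) \<le> k e * (norm (snd g e) + 1)"
      by (rule mult_left_mono[OF _ ke])
    show "k e * norm (snd h e) \<le> k e * norm (snd g e) + (if x \<in> e then k e else 0)"
      using e b by (auto simp: sh T_def algebra_simps)
  qed
  also have "\<dots> = (\<Sum>e\<in>T. k e * norm (snd g e)) + (\<Sum>e\<in>T \<inter> {e. x \<in> e}. k e)"
    by (simp add: sum.distrib sum.inter_restrict[OF finT])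
  also have "(\<Sum>e\<in>T. k e * norm (snd g e)) = (\<Sum>e\<in>{e\<in>E. snd g e \<noteq> 0}. k e * norm (snd g e))"
    by (rule sum.mono_neutral_right[OF finT]) (auto simp: T_def)
  also have "T \<inter> {e. x \<in> e} = {e\<in>E. x \<in> e}" by (auto simp: T_def)
  also have "(\<Sum>e\<in>{e\<in>E. x \<in> e}. k e) \<le> real (card {e\<in>E. x \<in> e}) * MMv"
    by (rule sum_bounded_above) (auto intro: MM_ge_k)
  also have "\<dots> \<le> real ddv * MMv"
    using inc_fin[OF x] MM_pos by (intro mult_right_mono) auto
  finally have "(\<Sum>e\<in>{e\<in>E. snd h e \<noteq> 0}. k e * norm (snd h e)) \<le>
     (\<Sum>e\<in>{e\<in>E. snd g e \<noteq> 0}. k e * norm (snd g e)) + lam"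
    by (simp add: lam_def mult.commute)
  then have "norm1 V E k m h \<le> norm1 V E k m g + lam"
    unfolding norm1_def fh by simp
  with gh show ?thesis by (simp add: h_def)
qed

lemma edge_step_good:
  assumes g: "good g" and e: "e \<in> E"
  shows "good (edge_step V0 g e) \<and> norm1 V E k m (edge_step V0 g e) \<le> norm1 V E k m g + lam"
proof -
  define h where "h = edge_step V0 g e"
  have sh: "snd h = snd g" by (simp add: h_def edge_step_def)
  have fh: "fst h z = (if z \<in> e \<and> z \<in> V0 then fst g z + sgn (snd g e \<bullet> ue z (other e z)) else fst g z)" for z
    by (simp add: h_def edge_step_def)
  have eV: "e \<subseteq> V" "finite e" "card e \<le> 2" using edge_sub[OF e] by auto
  have eVV: "\<And>z. z \<in> e \<Longrightarrow> z \<in> V" using eV by auto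
  define T where "T = {x\<in>V. fst g x \<noteq> 0} \<union> e"
  have finT: "finite T" unfolding T_def using g eV by (auto simp: good_def)
  have suppT: "{x. fst h x \<noteq> 0} \<subseteq> T" using g eV by (auto simp: T_def fh good_def split: if_splits)
  have gh: "good h" using g finite_subset[OF suppT finT] eV V0 by (auto simp: good_def fh sh)
  have "(\<Sum>x\<in>{x\<in>V. fst h x \<noteq> 0}. \<bar>fst h x\<bar> / m x) = (\<Sum>x\<in>T. \<bar>fst h x\<bar> / m x)"
    using suppT eVV by (intro sum.mono_neutral_left[OF finT]) (auto simp: T_def)
  also have "\<dots> \<le> (\<Sum>x\<in>T. \<bar>fst g x\<bar> / m x + (if x \<in> e then 1 / m x else 0))"
  proof (rule sum_mono)
    fix z assume z: "z \<in> T"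
    hence mz: "0 < m z" using m eV by (auto simp: T_def)
    have "\<bar>fst g z + sgn (snd g e \<bullet> ue z (other e z))\<bar> \<le> \<bar>fst g z\<bar> + 1"
      using abs_triangle_ineq[of "fst g z"] abs_sgn_le1[of "snd g e \<bullet> ue z (other e z)"] by linarith
    hence "\<bar>fst g z + sgn (snd g e \<bullet> ue z (other e z))\<bar> / m z \<le> (\<bar>fst g z\<bar> + 1) / m z"
      using mz by (intro divide_right_mono) auto
    then show "\<bar>fst h z\<bar> / m z \<le> \<bar>fst g z\<bar> / m z + (if z \<in> e then 1 / m z else 0)"
      using mz by (auto simp: fh add_divide_distrib)
  qed
  also have "\<dots> = (\<Sum>x\<in>T. \<bar>fst g x\<bar> / m x) + (\<Sum>x\<in>T \<inter> e. 1 / m x)"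
    by (simp add: sum.distrib sum.inter_restrict[OF finT])
  also have "(\<Sum>x\<in>T. \<bar>fst g x\<bar> / m x) = (\<Sum>x\<in>{x\<in>V. fst g x \<noteq> 0}. \<bar>fst g x\<bar> / m x)"
    using eVV by (intro sum.mono_neutral_right[OF finT]) (auto simp: T_def)
  also have "T \<inter> e = e" by (auto simp: T_def)
  also have "(\<Sum>x\<in>e. 1 / m x) \<le> real (card e) * MMv"
    by (rule sum_bounded_above) (use eV in \<open>auto intro: MM_ge_m\<close>)
  also have "\<dots> \<le> real ddv * MMv"
    using eV dd_2 MM_pos by (intro mult_right_mono) auto
  finally have "(\<Sum>x\<in>{x\<in>V. fst h x \<noteq> 0}. \<bar>fst h x\<bar> / m x) \<le>
     (\<Sum>x\<in>{x\<in>V. fst g x \<noteq> 0}. \<bar>fst g x\<bar> / m x) + lam"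
    by (simp add: lam_def mult.commute)
  then have "norm1 V E k m h \<le> norm1 V E k m g + lam"
    unfolding norm1_def sh by simp
  with gh show ?thesis by (simp add: h_def)
qed

lemma succs_good:
  assumes "good g" "h \<in> succs g"
  shows "good h \<and> norm1 V E k m h \<le> norm1 V E k m g + lam"
proof -
  from assms(2) consider "h = g" | x where "x \<in> V" "h = node_step E g x"
    | e where "e \<in> E" "h = edge_step V0 g e" unfolding succs_def by auto
  then show ?thesis
  proof cases
    case 1 then show ?thesis using assms(1) lam_pos by simp
  next
    case 2 then show ?thesis using node_step_good[OF assms(1)] by simp
  next
    case 3 then show ?thesis using edge_step_good[OF assms(1)] by simp
  qed
qed


lemma qrate_le_norm1:
  assumes g: "good g"
  shows "qrate V E k m V0 g \<le> norm1 V E k m g"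
proof -
  have f1: "finite {x\<in>V. fst g x \<noteq> 0}" "finite {e\<in>E. snd g e \<noteq> 0}" using g by (auto simp: good_def)
  have "(\<Sum>x\<in>{x\<in>V. fst g x \<noteq> 0 \<and> node_step E g x \<noteq> g}. \<bar>fst g x\<bar> / m x)
      \<le> (\<Sum>x\<in>{x\<in>V. fst g x \<noteq> 0}. \<bar>fst g x\<bar> / m x)"
    using m by (intro sum_mono2[OF f1(1)]) auto
  moreover have "(\<Sum>e\<in>{e\<in>E. snd g e \<noteq> 0 \<and> edge_step V0 g e \<noteq> g}. k e * norm (snd g e))
      \<le> (\<Sum>e\<in>{e\<in>E. snd g e \<noteq> 0}. k e * norm (snd g e))"
    using k by (intro sum_mono2[OF f1(2)]) auto
  ultimately show ?thesis unfolding qrate_def norm1_def by linarith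
qed

lemma qrate_nonneg: "0 \<le> qrate V E k m V0 g"
  unfolding qrate_def using m k by (intro add_nonneg_nonneg sum_nonneg) auto

lemma Qrate_nonneg: "0 \<le> Qrate V E k m V0 g h"
  unfolding Qrate_def using m k by (intro add_nonneg_nonneg sum_nonneg) auto

lemma jprob_nonneg: "0 \<le> jprob V E k m V0 g h"
  unfolding jprob_def using Qrate_nonneg qrate_nonneg by (auto intro: divide_nonneg_nonneg)

lemma sum_jprob:
  assumes g: "good g"
  shows "(\<Sum>h\<in>succs g. jprob V E k m V0 g h) = 1"
proof (cases "qrate V E k m V0 g = 0")
  case True
  have "(\<Sum>h\<in>succs g. jprob V E k m V0 g h) = (\<Sum>h\<in>succs g. if h = g then 1 else 0)"
    using True by (simp add: jprob_def)
  also have "\<dots> = 1" using finite_succs[OF g] by (simp add: succs_def)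
  finally show ?thesis .
next
  case False
  define q where "q = qrate V E k m V0 g"
  define A where "A = {x\<in>V. fst g x \<noteq> 0 \<and> node_step E g x \<noteq> g}"
  define B where "B = {e\<in>E. snd g e \<noteq> 0 \<and> edge_step V0 g e \<noteq> g}"
  define T where "T = succs g - {g}"
  have finT: "finite T" using finite_succs[OF g] by (simp add: T_def)
  have finA: "finite A" using g by (auto simp: good_def A_def intro: finite_subset)
  have finB: "finite B" using g by (auto simp: good_def B_def intro: finite_subset)
  have "(\<Sum>h\<in>succs g. jprob V E k m V0 g h) = (\<Sum>h\<in>T. jprob V E k m V0 g h)"
    using finite_succs[OF g] False by (intro sum.mono_neutral_right) (auto simp: T_def jprob_def)
  also have "\<dots> = (\<Sum>h\<in>T. Qrate V E k m V0 g h) / q"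
    using False by (simp add: jprob_def T_def q_def sum_divide_distrib)
  also have "(\<Sum>h\<in>T. Qrate V E k m V0 g h) =
     (\<Sum>h\<in>T. \<Sum>x\<in>{x\<in>A. node_step E g x = h}. \<bar>fst g x\<bar> / m x)
     + (\<Sum>h\<in>T. \<Sum>e\<in>{e\<in>B. edge_step V0 g e = h}. k e * norm (snd g e))"
    unfolding sum.distrib[symmetric] Qrate_def
    by (intro sum.cong refl arg_cong2[where f="(+)"]) (auto simp: A_def B_def T_def intro!: sum.cong)
  also have "(\<Sum>h\<in>T. \<Sum>x\<in>{x\<in>A. node_step E g x = h}. \<bar>fst g x\<bar> / m x) = (\<Sum>x\<in>A. \<bar>fst g x\<bar> / m x)"
    by (rule sum.group[OF finA finT]) (auto simp: A_def T_def succs_def)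
  also have "(\<Sum>h\<in>T. \<Sum>e\<in>{e\<in>B. edge_step V0 g e = h}. k e * norm (snd g e)) = (\<Sum>e\<in>B. k e * norm (snd g e))"
    by (rule sum.group[OF finB finT]) (auto simp: B_def T_def succs_def)
  also have "(\<Sum>x\<in>A. \<bar>fst g x\<bar> / m x) + (\<Sum>e\<in>B. k e * norm (snd g e)) = q"
    by (simp add: q_def qrate_def A_def B_def)
  finally show ?thesis using False by (simp add: q_def)
qed

fun paths :: "nat \<Rightarrow> (nat \<Rightarrow> 'a cfg) set" where
  "paths 0 = {\<lambda>_. f}"
| "paths (Suc n) = (\<lambda>(g, h). g(Suc n := h)) ` (SIGMA g:paths n. succs (g n))"

lemma paths_basic:
  "g \<in> paths n \<Longrightarrow> g 0 = f \<and> (\<forall>j>n. g j = f) \<and> (\<forall>j\<in>{1..n}. g j \<in> succs (g (j - 1)))"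
proof (induction n arbitrary: g)
  case 0 then show ?case by simp
next
  case (Suc n)
  then obtain g0 h where g: "g = g0(Suc n := h)" "g0 \<in> paths n" "h \<in> succs (g0 n)" by auto
  note IH = Suc.IH[OF g(2)]
  show ?case
  proof (intro conjI allI impI ballI)
    show "g 0 = f" using IH g by simp
  next
    fix j assume "Suc n < j" then show "g j = f" using IH g by simp
  next
    fix j assume j: "j \<in> {1..Suc n}"
    show "g j \<in> succs (g (j - 1))"
    proof (cases "j = Suc n")
      case True then show ?thesis using g by simp
    next
      case False
      with j have jn: "j \<in> {1..n}" by auto
      have "g0 j \<in> succs (g0 (j - 1))" using IH jn by blast
      moreover have "g j = g0 j" "g (j - 1) = g0 (j - 1)" using jn g(1) by auto
      ultimately show ?thesis by simp
    qed
  qed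
qed

lemma paths_good:
  assumes g: "g \<in> paths n"
  shows "j \<le> n \<Longrightarrow> good (g j) \<and> norm1 V E k m (g j) \<le> norm1 V E k m f + lam * j"
proof (induction j)
  case 0 then show ?case using paths_basic[OF g] good_f by simp
next
  case (Suc j)
  then have IH: "good (g j)" "norm1 V E k m (g j) \<le> norm1 V E k m f + lam * j" by auto
  have "Suc j \<in> {1..n}" using Suc.prems by simp
  hence "g (Suc j) \<in> succs (g (Suc j - 1))" using paths_basic[OF g] by blast
  hence "g (Suc j) \<in> succs (g j)" by simp
  from succs_good[OF IH(1) this] IH(2) show ?case by (simp add: algebra_simps)
qed

lemma finite_paths: "finite (paths n)"
proof (induction n)
  case 0 then show ?case by simp
next
  case (Suc n)
  have "finite (SIGMA g:paths n. succs (g n))"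
    using Suc paths_good[of _ n n] by (intro finite_SigmaI finite_succs) auto
  then show ?case by simp
qed

lemma sum_paths:
  "(\<Sum>g\<in>paths n. \<Prod>j\<in>{1..n}. jprob V E k m V0 (g (j - 1)) (g j)) = 1"
proof (induction n)
  case 0 then show ?case by simp
next
  case (Suc n)
  define \<Phi> where "\<Phi> = (\<lambda>(g::nat \<Rightarrow> 'a cfg, h). g(Suc n := h))"
  have inj: "inj_on \<Phi> (SIGMA g:paths n. succs (g n))"
  proof (rule inj_onI)
    fix p p' assume A0: "p \<in> (SIGMA g:paths n. succs (g n))" "p' \<in> (SIGMA g:paths n. succs (g n))" "\<Phi> p = \<Phi> p'"
    obtain g h where p: "p = (g, h)" by (cases p)
    obtain g' h' where p': "p' = (g', h')" by (cases p')
    have A: "g \<in> paths n" "g' \<in> paths n" "g(Suc n := h) = g'(Suc n := h')"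
      using A0 by (auto simp: p p' \<Phi>_def)
    have "h = h'" using fun_cong[OF A(3), of "Suc n"] by simp
    moreover have "g = g'"
    proof
      fix j show "g j = g' j"
      proof (cases "j = Suc n")
        case True then show ?thesis using paths_basic[OF A(1)] paths_basic[OF A(2)] by simp
      next
        case False then show ?thesis using fun_cong[OF A(3), of j] by simp
      qed
    qed
    ultimately show "p = p'" by (simp add: p p')
  qed
  have "(\<Sum>g\<in>paths (Suc n). \<Prod>j\<in>{1..Suc n}. jprob V E k m V0 (g (j - 1)) (g j))
     = (\<Sum>p\<in>(SIGMA g:paths n. succs (g n)). \<Prod>j\<in>{1..Suc n}. jprob V E k m V0 (\<Phi> p (j - 1)) (\<Phi> p j))"
    by (simp only: paths.simps \<Phi>_def[symmetric] sum.reindex[OF inj] comp_def)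
  also have "\<dots> = (\<Sum>g\<in>paths n. \<Sum>h\<in>succs (g n). \<Prod>j\<in>{1..Suc n}. jprob V E k m V0 ((g(Suc n := h)) (j - 1)) ((g(Suc n := h)) j))"
  proof -
    have finS: "\<forall>g\<in>paths n. finite (succs (g n))" using paths_good[of _ n n] finite_succs by auto
    show ?thesis unfolding sum.Sigma[OF finite_paths finS] by (simp add: \<Phi>_def case_prod_unfold)
  qed
  also have "\<dots> = (\<Sum>g\<in>paths n. (\<Prod>j\<in>{1..n}. jprob V E k m V0 (g (j - 1)) (g j)) * (\<Sum>h\<in>succs (g n). jprob V E k m V0 (g n) h))"
  proof (intro sum.cong refl)
    fix g assume g: "g \<in> paths n"
    have hh: "(\<Prod>j\<in>{1..Suc n}. jprob V E k m V0 ((g(Suc n := h)) (j - 1)) ((g(Suc n := h)) j))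
       = (\<Prod>j\<in>{1..n}. jprob V E k m V0 (g (j - 1)) (g j)) * jprob V E k m V0 (g n) h" for h
    proof -
      have "(\<Prod>j\<in>{1..Suc n}. jprob V E k m V0 ((g(Suc n := h)) (j - 1)) ((g(Suc n := h)) j))
         = (\<Prod>j\<in>{1..n}. jprob V E k m V0 ((g(Suc n := h)) (j - 1)) ((g(Suc n := h)) j)) * jprob V E k m V0 (g n) h"
        by (subst prod.cl_ivl_Suc) simp
      also have "(\<Prod>j\<in>{1..n}. jprob V E k m V0 ((g(Suc n := h)) (j - 1)) ((g(Suc n := h)) j))
          = (\<Prod>j\<in>{1..n}. jprob V E k m V0 (g (j - 1)) (g j))"
        by (intro prod.cong refl) auto
      finally show ?thesis .
    qed
    show "(\<Sum>h\<in>succs (g n). \<Prod>j\<in>{1..Suc n}. jprob V E k m V0 ((g(Suc n := h)) (j - 1)) ((g(Suc n := h)) j))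
      = (\<Prod>j\<in>{1..n}. jprob V E k m V0 (g (j - 1)) (g j)) * (\<Sum>h\<in>succs (g n). jprob V E k m V0 (g n) h)"
      by (simp only: hh sum_distrib_left)
  qed
  also have "\<dots> = (\<Sum>g\<in>paths n. \<Prod>j\<in>{1..n}. jprob V E k m V0 (g (j - 1)) (g j))"
    using paths_good[of _ n n] by (intro sum.cong refl) (simp add: sum_jprob)
  finally show ?case using Suc by simp
qed

end

context ips
begin

lemma key:
  fixes P :: "'w measure" and H :: "nat \<Rightarrow> 'w \<Rightarrow> 'a cfg" and X :: "nat \<Rightarrow> 'w \<Rightarrow> ennreal"
    and N :: "'v measure" and Y :: "nat \<Rightarrow> 'v \<Rightarrow> ennreal" and r n :: nat
    and S :: "(nat \<Rightarrow> ennreal) set"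
  assumes IPS: "IPS_realisation V E k m V0 f P H X"
    and Yule: "Yule_times lam r N Y"
    and r: "norm1 V E k m f \<le> lam * real r"
    and n: "1 \<le> n"
    and S: "S \<in> sets (PiM {1..n} (\<lambda>_. borel))"
    and up: "\<And>x y. x \<in> S \<Longrightarrow> y \<in> space (PiM {1..n} (\<lambda>_. borel)) \<Longrightarrow> (\<forall>j\<in>{1..n}. x j \<le> y j) \<Longrightarrow> y \<in> S"
  shows "measure N {\<omega>\<in>space N. (\<lambda>j\<in>{1..n}. Y j \<omega>) \<in> S} \<le> measure P {\<omega>\<in>space P. (\<lambda>j\<in>{1..n}. X j \<omega>) \<in> S}"
proof -
  have PP: "prob_space P" and Hm: "\<And>n g. {\<omega>\<in>space P. H n \<omega> = g} \<in> sets P"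
    and Xm: "\<And>n. X n \<in> borel_measurable P"
    and form: "\<And>n g t. g 0 = f \<Longrightarrow> (\<forall>j\<in>{1..n}. 0 \<le> t j) \<Longrightarrow>
        measure P {\<omega>\<in>space P. \<forall>j\<in>{1..n}. H j \<omega> = g j \<and> ennreal (t j) < X j \<omega>}
        = (\<Prod>j\<in>{1..n}. jprob V E k m V0 (g (j - 1)) (g j) * exp (- qrate V E k m V0 (g (j - 1)) * t j))"
    using IPS unfolding IPS_realisation_def by auto
  have NN: "prob_space N" and ind: "prob_space.indep_vars N (\<lambda>_. borel) Y {1..}"
    and Yd: "\<And>n t. n \<ge> 1 \<Longrightarrow> 0 \<le> t \<Longrightarrow> measure N {\<omega>\<in>space N. ennreal t < Y n \<omega>} = exp (- (real (n + r - 1) * lam) * t)"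
    using Yule unfolding Yule_times_def by auto
  interpret P: prob_space P by fact
  interpret N: prob_space N by fact
  define Xv where "Xv = (\<lambda>\<omega>. \<lambda>j\<in>{1..n}. X j \<omega>)"
  have Xvm: "Xv \<in> measurable P (PiM {1..n} (\<lambda>_. borel))"
    unfolding Xv_def by (intro measurable_restrict) (simp add: Xm)
  define Q where "Q g \<omega> = (\<forall>j\<in>{1..n}. H j \<omega> = g j)" for g \<omega>
  define c where "c g = (\<Prod>j\<in>{1..n}. jprob V E k m V0 (g (j - 1)) (g j))" for g
  define A where "A g = {\<omega>\<in>space P. (Q g \<omega> \<and> (\<forall>j\<in>{1..n}. 0 < X j \<omega>)) \<and> Xv \<omega> \<in> S}" for g
  define YS where "YS = measure N {\<omega>\<in>space N. (\<lambda>j\<in>{1..n}. Y j \<omega>) \<in> S}"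
  have Qm: "{\<omega>\<in>space P. Q g \<omega>} \<in> sets P" for g
    unfolding Q_def by (intro sets.sets_Collect_finite_All Hm) auto
  have Am: "A g \<in> sets P" for g
  proof -
    have "A g = {\<omega>\<in>space P. Q g \<omega>} \<inter> {\<omega>\<in>space P. \<forall>j\<in>{1..n}. 0 < X j \<omega>} \<inter> (Xv -` S \<inter> space P)"
      by (auto simp: A_def)
    moreover have "{\<omega>\<in>space P. \<forall>j\<in>{1..n}. 0 < X j \<omega>} \<in> sets P"
      using Xm by measurable
    ultimately show ?thesis using Qm measurable_sets[OF Xvm S] by auto
  qed
  have C: "c g * YS \<le> measure P (A g)" if g: "g \<in> paths n" for g
    unfolding YS_def A_def Xv_def
  proof (rule comp_lemma[OF PP NN Xm Qm _ _ n _ ind _ S up,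
        where q="\<lambda>j. qrate V E k m V0 (g (j - 1))" and lr="\<lambda>j. real (j + r - 1) * lam"])
    fix t :: "nat \<Rightarrow> real" assume t: "\<forall>j\<in>{1..n}. 0 \<le> t j"
    have "{\<omega>\<in>space P. Q g \<omega> \<and> (\<forall>j\<in>{1..n}. ennreal (t j) < X j \<omega>)}
        = {\<omega>\<in>space P. \<forall>j\<in>{1..n}. H j \<omega> = g j \<and> ennreal (t j) < X j \<omega>}"
      by (auto simp: Q_def)
    then show "measure P {\<omega>\<in>space P. Q g \<omega> \<and> (\<forall>j\<in>{1..n}. ennreal (t j) < X j \<omega>)}
        = c g * (\<Prod>j\<in>{1..n}. exp (- qrate V E k m V0 (g (j - 1)) * t j))"
      using form[of g n t] paths_basic[OF g] t by (simp add: c_def prod.distrib)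
  next
    show "0 \<le> c g" unfolding c_def by (intro prod_nonneg) (simp add: jprob_nonneg)
  next
    fix j assume j: "j \<in> {1..n}"
    have "qrate V E k m V0 (g (j - 1)) \<le> norm1 V E k m (g (j - 1))"
      using paths_good[OF g, of "j - 1"] j by (intro qrate_le_norm1) auto
    also have "\<dots> \<le> norm1 V E k m f + lam * real (j - 1)"
      using paths_good[OF g, of "j - 1"] j by auto
    also have "\<dots> \<le> lam * real r + lam * real (j - 1)" using r by simp
    also have "\<dots> = real (j + r - 1) * lam" using j by (simp add: algebra_simps of_nat_diff)
    finally show "0 \<le> qrate V E k m V0 (g (j - 1)) \<and> qrate V E k m V0 (g (j - 1)) \<le> real (j + r - 1) * lam"
      using qrate_nonneg by simp
  next
    fix j and t :: real assume "j \<in> {1..n}" "0 \<le> t"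
    then show "measure N {\<omega>\<in>space N. ennreal t < Y j \<omega>} = exp (- (real (j + r - 1) * lam) * t)"
      using Yd by auto
  qed
  have disj: "disjoint_family_on A (paths n)"
    unfolding disjoint_family_on_def
  proof (intro ballI impI)
    fix g g' assume g: "g \<in> paths n" and g': "g' \<in> paths n" and ne: "g \<noteq> g'"
    have "\<exists>j\<in>{1..n}. g j \<noteq> g' j"
    proof (rule ccontr)
      assume "\<not> ?thesis"
      hence "g j = g' j" for j using paths_basic[OF g] paths_basic[OF g']
        by (cases "j = 0"; cases "n < j") auto
      with ne show False by auto
    qed
    then show "A g \<inter> A g' = {}" by (auto simp: A_def Q_def)
  qed
  have "YS = (\<Sum>g\<in>paths n. c g) * YS" using sum_paths[of n] by (simp add: c_def)
  also have "\<dots> = (\<Sum>g\<in>paths n. c g * YS)" by (simp add: sum_distrib_right)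
  also have "\<dots> \<le> (\<Sum>g\<in>paths n. measure P (A g))" by (intro sum_mono C)
  also have "\<dots> = measure P (\<Union>g\<in>paths n. A g)"
    by (rule P.finite_measure_finite_Union[symmetric]) (use finite_paths Am disj in auto)
  also have "\<dots> \<le> measure P {\<omega>\<in>space P. Xv \<omega> \<in> S}"
    by (rule P.finite_measure_mono) (use measurable_sets[OF Xvm S] in \<open>auto simp: A_def vimage_def Int_def conj_commute\<close>)
  finally show ?thesis by (simp add: YS_def Xv_def)
qed

end

theorem corollary2p1:
  fixes V :: "'a::{real_inner,complete_space} set"
    and E :: "'a set set" and k :: "'a set \<Rightarrow> real" and m :: "'a \<Rightarrow> real"
    and V0 :: "'a set" and f :: "'a cfg" and r :: nat
    and P :: "'w measure" and H :: "nat \<Rightarrow> 'w \<Rightarrow> 'a cfg" and X :: "nat \<Rightarrow> 'w \<Rightarrow> ennreal"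
    and N :: "'v measure" and Y :: "nat \<Rightarrow> 'v \<Rightarrow> ennreal"
  assumes V: "V \<noteq> {}" "countable V"
    and E: "E \<subseteq> {{x, y} | x y. x \<in> V \<and> y \<in> V \<and> x \<noteq> y}"
    and k: "\<forall>e\<in>E. 0 \<le> k e"
    and m: "\<forall>x\<in>V. 0 < m x"
    and deg: "\<forall>x\<in>V. finite (nbrs E x)" "bdd_above ((\<lambda>x. card (nbrs E x)) ` V)"
    and Mfin: "bdd_above ((\<lambda>x. 1 / m x) ` V)" "bdd_above (k ` E)"
    and V0: "V0 \<subseteq> V"
    and f: "f \<in> F0 V E"
    and r: "real r \<ge> norm1 V E k m f / (MM V E k m * real (dd V E))"
    and IPS: "IPS_realisation V E k m V0 f P H X"
    and Yule: "Yule_times (MM V E k m * real (dd V E)) r N Y"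
  shows "(\<forall>n\<ge>1. sdom P (X n) N (Y n))
       \<and> (\<forall>n. sdom P (jtime X n) N (jtime Y n))
       \<and> (\<forall>t\<ge>0. sdom N (jcount Y t) P (jcount X t))"
proof -
  interpret ips V E k m V0 f using V E k m deg Mfin V0 f by unfold_locales auto
  have lamdef: "MM V E k m * real (dd V E) = lam" by (simp add: lam_def)
  have Yule': "Yule_times lam r N Y" using Yule lamdef by simp
  have rr: "norm1 V E k m f \<le> lam * real r"
  proof -
    have "norm1 V E k m f / lam \<le> real r" using r lamdef by simp
    then show ?thesis using lam_pos by (simp add: pos_divide_le_eq mult.commute)
  qed
  have PP: "prob_space P" and Xm: "\<And>n. X n \<in> borel_measurable P" using IPS unfolding IPS_realisation_def by auto
  have NN: "prob_space N" and ind: "prob_space.indep_vars N (\<lambda>_. borel) Y {1..}"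
    using Yule unfolding Yule_times_def by auto
  interpret P: prob_space P by fact
  interpret N: prob_space N by fact
  have Ym: "Y j \<in> borel_measurable N" if "1 \<le> j" for j
    using ind that by (auto simp: N.indep_vars_def)
  have jXm: "jtime X n \<in> borel_measurable P" for n
    unfolding jtime_def by (rule borel_measurable_sum) (simp add: Xm)
  have jYm: "jtime Y n \<in> borel_measurable N" for n
    unfolding jtime_def by (rule borel_measurable_sum) (simp add: Ym)
  have part1: "sdom P (X n) N (Y n)" if n: "1 \<le> n" for n
    unfolding sdom_def
  proof (intro allI impI)
    fix t :: real assume t: "0 \<le> t"
    define S where "S = {x\<in>space (PiM {1..n} (\<lambda>_. borel::ennreal measure)). ennreal t < x n}"
    have Sm: "S \<in> sets (PiM {1..n} (\<lambda>_. borel))"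
    proof -
      have "(\<lambda>x. x n) \<in> borel_measurable (PiM {1..n} (\<lambda>_. borel::ennreal measure))"
        by (rule measurable_component_singleton) (use n in auto)
      then show ?thesis unfolding S_def by measurable
    qed
    have "measure N {\<omega>\<in>space N. (\<lambda>j\<in>{1..n}. Y j \<omega>) \<in> S} \<le> measure P {\<omega>\<in>space P. (\<lambda>j\<in>{1..n}. X j \<omega>) \<in> S}"
    proof (rule key[OF IPS Yule' rr n Sm])
      fix x y assume xy: "x \<in> S" "y \<in> space (PiM {1..n} (\<lambda>_. borel))" "\<forall>j\<in>{1..n}. x j \<le> y j"
      hence "x n \<le> y n" using n by auto
      with xy show "y \<in> S" by (auto simp: S_def intro: less_le_trans)
    qed
    moreover have "{\<omega>\<in>space N. (\<lambda>j\<in>{1..n}. Y j \<omega>) \<in> S} = {\<omega>\<in>space N. ennreal t < Y n \<omega>}"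
      using n by (auto simp: S_def space_PiM)
    moreover have "{\<omega>\<in>space P. (\<lambda>j\<in>{1..n}. X j \<omega>) \<in> S} = {\<omega>\<in>space P. ennreal t < X n \<omega>}"
      using n by (auto simp: S_def space_PiM)
    ultimately show "measure N {\<omega>\<in>space N. ennreal t < Y n \<omega>} \<le> measure P {\<omega>\<in>space P. ennreal t < X n \<omega>}"
      by simp
  qed
  have part2: "sdom P (jtime X n) N (jtime Y n)" for n
    unfolding sdom_def
  proof (intro allI impI)
    fix t :: real assume t: "0 \<le> t"
    show "measure N {\<omega>\<in>space N. ennreal t < jtime Y n \<omega>} \<le> measure P {\<omega>\<in>space P. ennreal t < jtime X n \<omega>}"
    proof (cases "n = 0")
      case True then show ?thesis by (simp add: jtime_def)
    next
      case False
      hence n: "1 \<le> n" by simp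
      define S where "S = {x\<in>space (PiM {1..n} (\<lambda>_. borel::ennreal measure)). ennreal t < (\<Sum>j\<in>{1..n}. x j)}"
      have Sm: "S \<in> sets (PiM {1..n} (\<lambda>_. borel))"
      proof -
        have "(\<lambda>x. \<Sum>j\<in>{1..n}. x j) \<in> borel_measurable (PiM {1..n} (\<lambda>_. borel::ennreal measure))"
          by (rule borel_measurable_sum) (rule measurable_component_singleton)
        then show ?thesis unfolding S_def by measurable
      qed
      have "measure N {\<omega>\<in>space N. (\<lambda>j\<in>{1..n}. Y j \<omega>) \<in> S} \<le> measure P {\<omega>\<in>space P. (\<lambda>j\<in>{1..n}. X j \<omega>) \<in> S}"
      proof (rule key[OF IPS Yule' rr n Sm])
        fix x y assume xy: "x \<in> S" "y \<in> space (PiM {1..n} (\<lambda>_. borel))" "\<forall>j\<in>{1..n}. x j \<le> y j"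
        hence "(\<Sum>j\<in>{1..n}. x j) \<le> (\<Sum>j\<in>{1..n}. y j)" by (intro sum_mono) auto
        with xy show "y \<in> S" by (auto simp: S_def intro: less_le_trans)
      qed
      moreover have "{\<omega>\<in>space N. (\<lambda>j\<in>{1..n}. Y j \<omega>) \<in> S} = {\<omega>\<in>space N. ennreal t < jtime Y n \<omega>}"
        by (auto simp: S_def space_PiM jtime_def)
      moreover have "{\<omega>\<in>space P. (\<lambda>j\<in>{1..n}. X j \<omega>) \<in> S} = {\<omega>\<in>space P. ennreal t < jtime X n \<omega>}"
        by (auto simp: S_def space_PiM jtime_def)
      ultimately show ?thesis by simp
    qed
  qed
  have jmono: "jtime Z a \<omega> \<le> jtime Z b \<omega>" if "a \<le> b" for Z :: "nat \<Rightarrow> 'x \<Rightarrow> ennreal" and a b \<omega>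
    unfolding jtime_def using that by (intro sum_mono2) auto
  have jc: "{\<omega>\<in>space M. ennreal s < jcount Z t \<omega>} = space M - {\<omega>\<in>space M. ennreal t < jtime Z (nat \<lfloor>s\<rfloor> + 1) \<omega>}"
    if s: "0 \<le> s" for M :: "'x measure" and Z and s t
  proof -
    define K where "K = nat \<lfloor>s\<rfloor> + 1"
    have sK: "ennreal s < of_nat j \<longleftrightarrow> K \<le> j" for j
    proof -
      have "ennreal s < of_nat j \<longleftrightarrow> s < real j"
        using s by (simp add: ennreal_of_nat_eq_real_of_nat ennreal_less_iff)
      also have "\<dots> \<longleftrightarrow> \<lfloor>s\<rfloor> < int j" by (metis floor_less_iff of_int_of_nat_eq)
      also have "\<dots> \<longleftrightarrow> nat \<lfloor>s\<rfloor> < j" using s by (intro nat_less_iff[symmetric]) simp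
      also have "\<dots> \<longleftrightarrow> K \<le> j" unfolding K_def by auto
      finally show ?thesis .
    qed
    have eq: "ennreal s < jcount Z t \<omega> \<longleftrightarrow> jtime Z K \<omega> \<le> ennreal t" for \<omega>
    proof
      assume "ennreal s < jcount Z t \<omega>"
      then obtain j where j: "jtime Z j \<omega> \<le> ennreal t" "ennreal s < of_nat j"
        unfolding jcount_def less_Sup_iff by blast
      from j(2) sK have "K \<le> j" by blast
      hence "jtime Z K \<omega> \<le> jtime Z j \<omega>" by (rule jmono)
      then show "jtime Z K \<omega> \<le> ennreal t" using j(1) by (rule order_trans)
    next
      assume "jtime Z K \<omega> \<le> ennreal t"
      then show "ennreal s < jcount Z t \<omega>" unfolding jcount_def less_Sup_iff
        by (intro bexI[of _ "of_nat K"]) (auto simp: sK)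
    qed
    show ?thesis unfolding K_def[symmetric]
    proof (rule set_eqI)
      fix \<omega>
      have "(jtime Z K \<omega> \<le> ennreal t) = (\<not> ennreal t < jtime Z K \<omega>)" by (rule not_less[symmetric])
      then show "\<omega> \<in> {\<omega>\<in>space M. ennreal s < jcount Z t \<omega>} \<longleftrightarrow> \<omega> \<in> space M - {\<omega>\<in>space M. ennreal t < jtime Z K \<omega>}"
        using eq[of \<omega>] by blast
    qed
  qed
  have part3: "sdom N (jcount Y t) P (jcount X t)" if t: "0 \<le> t" for t
    unfolding sdom_def
  proof (intro allI impI)
    fix s :: real assume s: "0 \<le> s"
    define K where "K = nat \<lfloor>s\<rfloor> + 1"
    have eX: "{\<omega>\<in>space P. ennreal t < jtime X K \<omega>} \<in> sets P" using jXm by measurable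
    have eY: "{\<omega>\<in>space N. ennreal t < jtime Y K \<omega>} \<in> sets N" using jYm by measurable
    have "measure P {\<omega>\<in>space P. ennreal s < jcount X t \<omega>} = 1 - measure P {\<omega>\<in>space P. ennreal t < jtime X K \<omega>}"
      unfolding jc[OF s] K_def[symmetric] using P.prob_compl[OF eX] .
    also have "\<dots> \<le> 1 - measure N {\<omega>\<in>space N. ennreal t < jtime Y K \<omega>}"
      using part2[of K] t unfolding sdom_def by auto
    also have "\<dots> = measure N {\<omega>\<in>space N. ennreal s < jcount Y t \<omega>}"
      unfolding jc[OF s] K_def[symmetric] using N.prob_compl[OF eY] by simp
    finally show "measure P {\<omega>\<in>space P. ennreal s < jcount X t \<omega>} \<le> measure N {\<omega>\<in>space N. ennreal s < jcount Y t \<omega>}" .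
  qed
  show ?thesis using part1 part2 part3 by auto
qed

end
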